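(* Let $l,t,s,n$ be integers with $3\leq l\leq t$, $s\geq l+1$ and $n\geq 2\binom{3s}{2}$. Then $$ex(n,\{K_{l,t},M_{s+1}\})\leq (t-1)\binom{s}{l}+(l-1)n-\frac{l(l-1)}{2}+ex(2(s-l)+1,K_{l,t}).$$
   Context: All graphs are finite and simple. $ex(n,\mathscr{F})$ is the maximum number of edges of an $n$-vertex graph containing no member of $\mathscr{F}$ as a subgraph, and $ex(m,K_{l,t})=ex(m,\{K_{l,t}\})$. $K_{l,t}$ is the complete bipartite graph with parts of sizes $l,t$; $M_{s+1}$ is the matching of $s+1$ disjoint edges. *)

theory Defs
  imports Complex_Main
begin

type_synonym 'a sgraph = "'a set \<times> 'a set set"

definition simple_graph :: "'a sgraph \<Rightarrow> bool" where
  "simple_graph G \<longleftrightarrow> finite (fst G) \<and>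
     snd G \<subseteq> {e. \<exists>u v. u \<in> fst G \<and> v \<in> fst G \<and> u \<noteq> v \<and> e = {u, v}}"

definition subgraph_of :: "'b sgraph \<Rightarrow> 'a sgraph \<Rightarrow> bool" where
  "subgraph_of H G \<longleftrightarrow> (\<exists>f. inj_on f (fst H) \<and> f ` fst H \<subseteq> fst G \<and>
                                (\<forall>e\<in>snd H. f ` e \<in> snd G))"

definition K_bip :: "nat \<Rightarrow> nat \<Rightarrow> nat sgraph" where
  "K_bip l t = ({0..<l+t}, {{i, j} | i j. i < l \<and> l \<le> j \<and> j < l + t})"

definition matching_graph :: "nat \<Rightarrow> nat sgraph" where
  "matching_graph k = ({0..<2*k}, {{2*i, 2*i+1} | i. i < k})"

definition ex :: "nat \<Rightarrow> nat sgraph set \<Rightarrow> nat" where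
  "ex n F = Max {card E | E. simple_graph ({0..<n}, E) \<and>
                              (\<forall>H\<in>F. \<not> subgraph_of H ({0..<n}, E))}"

end

theory Submission
  imports Defs
begin

locale sg =
  fixes n :: nat and E :: "nat set set"
  assumes sg: "simple_graph ({0..<n}, E)"
begin

definition adj :: "nat \<Rightarrow> nat \<Rightarrow> bool" where
  "adj u v \<longleftrightarrow> {u, v} \<in> E"

lemma adj_sym: "adj u v = adj v u"
  unfolding adj_def by (simp add: insert_commute)

lemma E_form: "e \<in> E \<Longrightarrow> \<exists>u v. u \<in> {0..<n} \<and> v \<in> {0..<n} \<and> u \<noteq> v \<and> e = {u, v}"
  using sg unfolding simple_graph_def by auto

lemma adjD: assumes "adj u v" shows "u < n" "v < n" "u \<noteq> v"
proof -
  from assms have "{u,v} \<in> E" by (simp add: adj_def)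
  from E_form[OF this] obtain x y where xy: "x \<in> {0..<n}" "y \<in> {0..<n}" "x \<noteq> y" "{u,v} = {x,y}" by blast
  from xy(4) have "(u = x \<and> v = y) \<or> (u = y \<and> v = x)" by (simp add: doubleton_eq_iff)
  then show "u < n" "v < n" "u \<noteq> v" using xy(1-3) by auto
qed

lemma adj_irrefl: "\<not> adj u u" using adjD by blast

lemma E_sub: "E \<subseteq> Pow {0..<n}" using sg unfolding simple_graph_def by auto

lemma finite_E: "finite E"
  by (rule finite_subset[OF E_sub]) simp

definition nb :: "nat \<Rightarrow> nat set" where
  "nb v = {u. adj v u}"

lemma nb_sub: "nb v \<subseteq> {0..<n}" using adjD unfolding nb_def by auto

lemma finite_nb: "finite (nb v)" using nb_sub finite_subset by blast

lemma in_nb: "u \<in> nb v \<longleftrightarrow> adj v u" by (simp add: nb_def)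

definition PP :: "nat set \<Rightarrow> nat set \<Rightarrow> nat" where
  "PP A B = (\<Sum>u\<in>A. card (nb u \<inter> B))"

lemma PP_ind: "finite B \<Longrightarrow> PP A B = (\<Sum>u\<in>A. \<Sum>v\<in>B. if adj u v then 1 else 0)"
  unfolding PP_def
proof (rule sum.cong[OF refl])
  fix u assume "finite B"
  have "nb u \<inter> B = {v\<in>B. adj u v}" by (auto simp: nb_def)
  then show "card (nb u \<inter> B) = (\<Sum>v\<in>B. if adj u v then 1 else 0)"
    using \<open>finite B\<close> by (simp add: sum.inter_filter[symmetric])
qed

lemma PP_sym: "finite A \<Longrightarrow> finite B \<Longrightarrow> PP A B = PP B A"
  by (simp add: PP_ind sum.swap[of _ A] adj_sym)

lemma PP_Un2: "B \<inter> C = {} \<Longrightarrow> finite B \<Longrightarrow> finite C \<Longrightarrow> PP A (B \<union> C) = PP A B + PP A C"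
  unfolding PP_def
  by (simp add: Int_Un_distrib card_Un_disjoint sum.distrib disjoint_iff)

lemma PP_Un1: "A \<inter> A' = {} \<Longrightarrow> finite A \<Longrightarrow> finite A' \<Longrightarrow> PP (A \<union> A') B = PP A B + PP A' B"
  unfolding PP_def by (simp add: sum.union_disjoint)

lemma handshake: "2 * card E = PP {0..<n} {0..<n}"
proof -
  have "PP {0..<n} {0..<n} = (\<Sum>u\<in>{0..<n}. card (nb u))"
    unfolding PP_def using nb_sub by (simp add: Int_absorb2)
  also have "\<dots> = card (Sigma {0..<n} nb)"
    using finite_nb by (simp add: card_SigmaI)
  also have "Sigma {0..<n} nb = (\<Union>e\<in>E. {(u,v). {u,v} = e})"
    using adjD by (auto simp: nb_def adj_def)
  also have "card \<dots> = (\<Sum>e\<in>E. card {(u,v). {u,v} = e})"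
  proof (rule card_UN_disjoint[OF finite_E])
    show "\<forall>e\<in>E. finite {(u, v). {u, v} = e}"
    proof
      fix e assume "e \<in> E"
      then obtain x y where "e = {x,y}" "x \<noteq> y" using E_form by blast
      then have "{(u, v). {u, v} = e} = {(x,y),(y,x)}" by (auto simp: doubleton_eq_iff)
      then show "finite {(u, v). {u, v} = e}" by simp
    qed
    show "\<forall>i\<in>E. \<forall>j\<in>E. i \<noteq> j \<longrightarrow> {(u, v). {u, v} = i} \<inter> {(u, v). {u, v} = j} = {}" by auto
  qed
  also have "\<dots> = (\<Sum>e\<in>E. 2)"
  proof (rule sum.cong[OF refl])
    fix e assume "e \<in> E"
    then obtain x y where "e = {x,y}" "x \<noteq> y" using E_form by blast
    then have "{(u, v). {u, v} = e} = {(x,y),(y,x)}" by (auto simp: doubleton_eq_iff)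
    then show "card {(u, v). {u, v} = e} = 2" using \<open>x \<noteq> y\<close> by simp
  qed
  finally show ?thesis by simp
qed

lemma PP_le_card: "finite A \<Longrightarrow> PP A B \<le> card A * k" if "\<And>u. u \<in> A \<Longrightarrow> card (nb u \<inter> B) \<le> k"
  unfolding PP_def using that sum_bounded_above[of A "\<lambda>u. card (nb u \<inter> B)" k] by simp

end

context sg begin

lemma E_minmax: assumes "e \<in> E" shows "e = {Min e, Max e}" "Min e < Max e"
proof -
  obtain u v where "u \<noteq> v" "e = {u,v}" using E_form assms by blast
  then show "e = {Min e, Max e}" "Min e < Max e"
    by (auto simp: min_def max_def)
qed

definition matching :: "nat set set \<Rightarrow> bool" where
  "matching M \<longleftrightarrow> M \<subseteq> E \<and> (\<forall>e\<in>M. \<forall>e'\<in>M. e \<noteq> e' \<longrightarrow> e \<inter> e' = {})"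

lemma matching_subgraph:
  assumes "matching M" "card M = k"
  shows "subgraph_of (matching_graph k) ({0..<n}, E)"
proof -
  have finM: "finite M" using assms(1) finite_E finite_subset unfolding matching_def by blast
  obtain g where g: "bij_betw g {0..<k} M" using ex_bij_betw_nat_finite[OF finM] assms(2) by blast
  define f where "f i = (if even i then Min (g (i div 2)) else Max (g (i div 2)))" for i
  have gE: "i < k \<Longrightarrow> g i \<in> E" for i using g assms(1) unfolding matching_def bij_betw_def by auto
  have fin: "i < 2*k \<Longrightarrow> f i \<in> g (i div 2)" for i
  proof -
    assume "i < 2*k"
    then have "i div 2 < k" by simp
    from E_minmax(1)[OF gE[OF this]] have "Min (g (i div 2)) \<in> g (i div 2)" "Max (g (i div 2)) \<in> g (i div 2)"
      by (metis insertI1, metis insertI1 insertI2)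
    then show "f i \<in> g (i div 2)" unfolding f_def by simp
  qed
  have inj: "inj_on f {0..<2*k}"
  proof (rule inj_onI)
    fix i j assume i: "i \<in> {0..<2*k}" and j: "j \<in> {0..<2*k}" and eq: "f i = f j"
    show "i = j"
    proof (cases "i div 2 = j div 2")
      case True
      have "even i = even j"
      proof (rule ccontr)
        assume "even i \<noteq> even j"
        then have "Min (g (i div 2)) = Max (g (i div 2))" using eq True unfolding f_def by (auto split: if_splits)
        moreover have "i div 2 < k" using i by auto
        ultimately show False using E_minmax(2)[OF gE[of "i div 2"]] by simp
      qed
      then show ?thesis using True by presburger
    next
      case False
      have ik: "i div 2 < k" "j div 2 < k" using i j by auto
      have "g (i div 2) \<noteq> g (j div 2)" using False g ik unfolding bij_betw_def inj_on_def by auto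
      moreover have "g (i div 2) \<in> M" "g (j div 2) \<in> M" using g ik unfolding bij_betw_def by auto
      ultimately have "g (i div 2) \<inter> g (j div 2) = {}" using assms(1) unfolding matching_def by blast
      then show ?thesis using fin[of i] fin[of j] i j eq by auto
    qed
  qed
  have "f ` {0..<2*k} \<subseteq> {0..<n}"
  proof
    fix x assume "x \<in> f ` {0..<2*k}"
    then obtain i where "i < 2*k" "x = f i" by auto
    then have "x \<in> g (i div 2)" "g (i div 2) \<in> E" using fin gE by auto
    then show "x \<in> {0..<n}" using E_sub by blast
  qed
  moreover have "\<forall>e\<in>snd (matching_graph k). f ` e \<in> E"
  proof
    fix e assume "e \<in> snd (matching_graph k)"
    then obtain i where i: "i < k" "e = {2*i, 2*i+1}" unfolding matching_graph_def by auto
    then have "f ` e = {Min (g i), Max (g i)}" unfolding f_def by (simp add: insert_commute)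
    then show "f ` e \<in> E" using E_minmax(1)[OF gE[OF i(1)]] gE[OF i(1)] by simp
  qed
  ultimately show ?thesis using inj unfolding subgraph_of_def matching_graph_def by auto
qed

lemma Kbip_subgraph:
  assumes "A \<subseteq> {0..<n}" "B \<subseteq> {0..<n}" "card A = l" "card B = t" "\<forall>a\<in>A. \<forall>b\<in>B. adj a b"
  shows "subgraph_of (K_bip l t) ({0..<n}, E)"
proof -
  have fA: "finite A" "finite B" using assms(1,2) finite_subset by auto
  obtain gA where gA: "bij_betw gA {0..<l} A" using ex_bij_betw_nat_finite[OF fA(1)] assms(3) by blast
  obtain gB where gB: "bij_betw gB {0..<t} B" using ex_bij_betw_nat_finite[OF fA(2)] assms(4) by blast
  have disj: "A \<inter> B = {}" using assms(5) adj_irrefl by blast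
  define f where "f i = (if i < l then gA i else gB (i - l))" for i
  have fA': "i < l \<Longrightarrow> f i \<in> A" for i using gA unfolding f_def bij_betw_def by auto
  have fB': "l \<le> i \<Longrightarrow> i < l + t \<Longrightarrow> f i \<in> B" for i using gB unfolding f_def bij_betw_def by auto
  have inj: "inj_on f {0..<l+t}"
  proof (rule inj_onI)
    fix i j assume i: "i \<in> {0..<l+t}" and j: "j \<in> {0..<l+t}" and eq: "f i = f j"
    consider "i < l" "j < l" | "i < l" "\<not> j < l" | "\<not> i < l" "j < l" | "\<not> i < l" "\<not> j < l" by blast
    then show "i = j"
    proof cases
      case 1 then show ?thesis using eq gA unfolding f_def bij_betw_def inj_on_def by auto
    next
      case 2 then show ?thesis using eq fA'[of i] fB'[of j] j disj by auto
    next
      case 3 then show ?thesis using eq fA'[of j] fB'[of i] i disj by auto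
    next
      case 4
      then have "gB (i - l) = gB (j - l)" using eq unfolding f_def by auto
      then have "i - l = j - l" using gB i j 4 unfolding bij_betw_def inj_on_def by auto
      then show ?thesis using 4 by auto
    qed
  qed
  have img: "f ` {0..<l+t} \<subseteq> {0..<n}"
  proof
    fix x assume "x \<in> f ` {0..<l+t}"
    then obtain i where "i < l + t" "x = f i" by auto
    then show "x \<in> {0..<n}" using fA'[of i] fB'[of i] assms(1,2) by (cases "i < l") auto
  qed
  have "\<forall>e\<in>snd (K_bip l t). f ` e \<in> E"
  proof
    fix e assume "e \<in> snd (K_bip l t)"
    then obtain i j where ij: "i < l" "l \<le> j" "j < l + t" "e = {i,j}" unfolding K_bip_def by auto
    then have "adj (f i) (f j)" using assms(5) fA'[of i] fB'[of j] by auto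
    then show "f ` e \<in> E" using ij unfolding adj_def by simp
  qed
  then show ?thesis using inj img unfolding subgraph_of_def K_bip_def by auto
qed

end

locale free = sg +
  fixes l t s :: nat
  assumes Kfree: "\<not> subgraph_of (K_bip l t) ({0..<n}, E)"
  and Mfree: "\<not> subgraph_of (matching_graph (s+1)) ({0..<n}, E)"
begin

lemma matching_le: assumes "matching M" shows "card M \<le> s"
proof (rule ccontr)
  assume "\<not> card M \<le> s"
  then have "s + 1 \<le> card M" by simp
  then obtain M' where "M' \<subseteq> M" "card M' = s + 1" by (rule obtain_subset_with_card_n)
  then have "matching M'" using assms unfolding matching_def by blast
  then show False using matching_subgraph[OF _ \<open>card M' = s+1\<close>] Mfree by simp
qed

lemma common_nb: assumes "A \<subseteq> {0..<n}" "card A = l"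
  shows "card {v\<in>{0..<n}. A \<subseteq> nb v} \<le> t - 1"
proof (rule ccontr)
  assume "\<not> ?thesis"
  then have "t \<le> card {v\<in>{0..<n}. A \<subseteq> nb v}" by simp
  then obtain B where B: "B \<subseteq> {v\<in>{0..<n}. A \<subseteq> nb v}" "card B = t"
    by (rule obtain_subset_with_card_n)
  have "\<forall>a\<in>A. \<forall>b\<in>B. adj a b"
  proof (intro ballI)
    fix a b assume "a \<in> A" "b \<in> B"
    then have "a \<in> nb b" using B(1) by blast
    then show "adj a b" by (simp add: in_nb adj_sym)
  qed
  moreover have "B \<subseteq> {0..<n}" using B(1) by blast
  ultimately have "subgraph_of (K_bip l t) ({0..<n}, E)" using Kbip_subgraph[OF assms(1) _ assms(2) B(2)] by blast
  then show False using Kfree by simp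
qed

end

lemma le_choose_aux: "1 \<le> l \<Longrightarrow> d + 1 \<le> l + (d choose l)"
proof (induction d)
  case 0 then show ?case by simp
next
  case (Suc d)
  obtain l' where l': "l = Suc l'" using Suc.prems by (cases l) auto
  have eq: "Suc d choose l = (d choose l') + (d choose l)" using l' by simp
  show ?case
  proof (cases "l' \<le> d")
    case True
    then have "0 < d choose l'" by (rule zero_less_binomial)
    then show ?thesis using Suc eq by linarith
  next
    case False
    then show ?thesis using l' by simp
  qed
qed

lemma le_choose: "1 \<le> l \<Longrightarrow> d \<le> (l - 1) + (d choose l)"
  using le_choose_aux[of l d] by simp

context free begin

lemma sum_choose_nb: assumes "S \<subseteq> {0..<n}"
  shows "(\<Sum>v\<in>{0..<n}. card (nb v \<inter> S) choose l) \<le> (t - 1) * (card S choose l)"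
proof -
  have finS: "finite S" using assms finite_subset by blast
  define Ls where "Ls = {A. A \<subseteq> S \<and> card A = l}"
  have finLs: "finite Ls" unfolding Ls_def using finS by simp
  have "(\<Sum>v\<in>{0..<n}. card (nb v \<inter> S) choose l) = (\<Sum>v\<in>{0..<n}. card {A\<in>Ls. A \<subseteq> nb v})"
  proof (rule sum.cong[OF refl])
    fix v
    have "{A\<in>Ls. A \<subseteq> nb v} = {A. A \<subseteq> nb v \<inter> S \<and> card A = l}" unfolding Ls_def by auto
    then show "card (nb v \<inter> S) choose l = card {A\<in>Ls. A \<subseteq> nb v}"
      using n_subsets[of "nb v \<inter> S" l] finS by simp
  qed
  also have "\<dots> = (\<Sum>v\<in>{0..<n}. \<Sum>A\<in>Ls. if A \<subseteq> nb v then 1 else 0)"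
    using finLs by (simp add: sum.inter_filter[symmetric])
  also have "\<dots> = (\<Sum>A\<in>Ls. \<Sum>v\<in>{0..<n}. if A \<subseteq> nb v then 1 else 0)"
    by (rule sum.swap)
  also have "\<dots> = (\<Sum>A\<in>Ls. card {v\<in>{0..<n}. A \<subseteq> nb v})"
    by (simp add: sum.inter_filter[symmetric])
  also have "\<dots> \<le> (\<Sum>A\<in>Ls. t - 1)"
  proof (rule sum_mono)
    fix A assume "A \<in> Ls"
    then have "A \<subseteq> {0..<n}" "card A = l" using assms unfolding Ls_def by auto
    then show "card {v\<in>{0..<n}. A \<subseteq> nb v} \<le> t - 1" by (rule common_nb)
  qed
  also have "\<dots> = (t - 1) * (card S choose l)"
    using n_subsets[OF finS, of l] unfolding Ls_def by simp
  finally show ?thesis .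
qed

lemma PP_S_bound: assumes "S \<subseteq> {0..<n}" "W \<subseteq> {0..<n}" "1 \<le> l"
  shows "PP W S \<le> (l - 1) * card W + (t - 1) * (card S choose l)"
proof -
  have "PP W S \<le> (\<Sum>v\<in>W. (l - 1) + (card (nb v \<inter> S) choose l))"
    unfolding PP_def by (rule sum_mono) (rule le_choose[OF assms(3)])
  also have "\<dots> = (l - 1) * card W + (\<Sum>v\<in>W. card (nb v \<inter> S) choose l)"
    by (simp add: sum.distrib)
  also have "(\<Sum>v\<in>W. card (nb v \<inter> S) choose l) \<le> (\<Sum>v\<in>{0..<n}. card (nb v \<inter> S) choose l)"
    by (rule sum_mono2) (use assms in auto)
  also have "\<dots> \<le> (t - 1) * (card S choose l)" by (rule sum_choose_nb[OF assms(1)])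
  finally show ?thesis by simp
qed

end

context sg begin

lemma finite_matching: "matching M \<Longrightarrow> finite M"
  unfolding matching_def using finite_E by (metis finite_subset)

lemma card_Vs: "matching M \<Longrightarrow> card (\<Union>M) \<le> 2 * card M"
proof -
  assume m: "matching M"
  have "card (\<Union>M) \<le> sum card M" by (rule card_Union_le_sum_card)
  also have "\<dots> = sum (\<lambda>_. 2) M"
  proof (rule sum.cong[OF refl])
    fix e assume "e \<in> M"
    then have "e \<in> E" using m unfolding matching_def by auto
    then obtain u v where "u \<noteq> v" "e = {u,v}" using E_form by blast
    then show "card e = 2" by simp
  qed
  finally show ?thesis by simp
qed

lemma edge_eq: "e \<in> E \<Longrightarrow> x \<in> e \<Longrightarrow> y \<in> e \<Longrightarrow> x \<noteq> y \<Longrightarrow> e = {x, y}"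
  using E_form by blast

lemma edge_adj: "e \<in> E \<Longrightarrow> x \<in> e \<Longrightarrow> y \<in> e \<Longrightarrow> x \<noteq> y \<Longrightarrow> adj x y"
  using edge_eq unfolding adj_def by blast

lemma Vs_sub: "matching M \<Longrightarrow> \<Union>M \<subseteq> {0..<n}"
  unfolding matching_def using E_sub by blast

end

context free begin

definition Lset :: "nat set" where
  "Lset = {v\<in>{0..<n}. 3 * s \<le> card (nb v)}"

lemma greedy:
  assumes s2: "2 \<le> s" and L'L: "L' \<subseteq> Lset" and m0: "matching M0" and disj: "\<Union>M0 \<inter> L' = {}"
    and cnt: "card L' + card M0 \<le> s + 1"
  shows "\<exists>M. matching M \<and> card M = card L' + card M0"
proof -
  have finL': "finite L'" by (rule finite_subset[OF L'L]) (simp add: Lset_def)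
  have "\<forall>K. K \<subseteq> L' \<longrightarrow> (\<exists>M. matching M \<and> card M = card K + card M0 \<and> \<Union>M \<inter> L' = K)"
  proof (intro allI impI)
    fix K assume "K \<subseteq> L'"
    then have "finite K" using finL' by (rule finite_subset)
    then show "\<exists>M. matching M \<and> card M = card K + card M0 \<and> \<Union>M \<inter> L' = K"
      using \<open>K \<subseteq> L'\<close>
    proof (induction K rule: finite_induct)
      case empty
      have "card {} + card M0 = card M0" by simp
      show ?case using m0 disj by (intro exI[of _ M0]) simp
    next
      case (insert x K)
      have KL: "K \<subseteq> L'" using insert.prems by blast
      then obtain M where M: "matching M" "card M = card K + card M0" "\<Union>M \<inter> L' = K"
        using insert.IH by blast
      have xL': "x \<in> L'" using insert.prems by blast
      have xM: "x \<notin> \<Union>M" using M(3) xL' insert(2) by blast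
      have cK: "card (insert x K) \<le> card L'" using insert.prems finL' by (simp add: card_mono)
      have "card (\<Union>M \<union> L') \<le> card (\<Union>M) + card L'" by (rule card_Un_le)
      have "card (\<Union>M \<union> L') = card (\<Union>M) + card L' - card K"
      proof -
        have fM: "finite (\<Union>M)" using finite_subset[OF Vs_sub[OF M(1)]] by simp
        have "card (\<Union>M \<union> L') + card (\<Union>M \<inter> L') = card (\<Union>M) + card L'"
          using card_Un_Int[OF fM finL'] by simp
        then show ?thesis using M(3) by simp
      qed
      moreover have "card (\<Union>M) \<le> 2 * card M" by (rule card_Vs[OF M(1)])
      moreover have "card K + 1 \<le> card L'" using cK insert.hyps by simp
      ultimately have "card (\<Union>M \<union> L') < 3 * s" using M(2) cnt s2 by linarith
      moreover have "3 * s \<le> card (nb x)" using xL' L'L unfolding Lset_def by auto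
      moreover have fU: "finite (\<Union>M \<union> L')" using finite_subset[OF Vs_sub[OF M(1)]] finL' by simp
      ultimately have "\<not> nb x \<subseteq> \<Union>M \<union> L'"
        using card_mono[OF fU, of "nb x"] by linarith
      then obtain y where y: "y \<in> nb x" "y \<notin> \<Union>M" "y \<notin> L'" by blast
      have adjxy: "adj x y" using y(1) by (simp add: in_nb)
      then have exy: "{x,y} \<in> E" by (simp add: adj_def)
      define M' where "M' = insert {x,y} M"
      have "matching M'"
        unfolding M'_def matching_def
      proof (intro conjI ballI impI)
        show "insert {x, y} M \<subseteq> E" using M(1) exy unfolding matching_def by auto
      next
        fix e e' assume e: "e \<in> insert {x,y} M" and e': "e' \<in> insert {x,y} M" and ne: "e \<noteq> e'"
        show "e \<inter> e' = {}"
        proof (cases "e = {x,y}")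
          case True
          then have "e' \<in> M" using ne e' by auto
          then show ?thesis using True xM y(2) by blast
        next
          case False
          then have eM: "e \<in> M" using e by auto
          show ?thesis
          proof (cases "e' = {x,y}")
            case True
            then show ?thesis using eM xM y(2) by blast
          next
            case False
            then have "e' \<in> M" using e' by auto
            then show ?thesis using eM ne M(1) unfolding matching_def by blast
          qed
        qed
      qed
      moreover have "{x,y} \<notin> M" using xM by blast
      then have "card M' = card M + 1" unfolding M'_def using finite_matching[OF M(1)] by simp
      moreover have "\<Union>M' \<inter> L' = insert x K" unfolding M'_def using M(3) y(3) xL' by auto
      ultimately show ?case using M(2) insert.hyps by auto
    qed
  qed
  then show ?thesis by blast
qed

lemma card_L: assumes "2 \<le> s" shows "card Lset \<le> s"
proof (rule ccontr)
  assume "\<not> card Lset \<le> s"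
  then have "s + 1 \<le> card Lset" by simp
  then obtain L' where L': "L' \<subseteq> Lset" "card L' = s + 1" by (rule obtain_subset_with_card_n)
  have "matching {}" unfolding matching_def by simp
  then obtain M where "matching M" "card M = s + 1"
    using greedy[OF assms L'(1), of "{}"] L'(2) by auto
  then show False using matching_le by fastforce
qed

lemma H_match: assumes "2 \<le> s" "matching M" "\<Union>M \<inter> Lset = {}"
  shows "card M + card Lset \<le> s"
proof (rule ccontr)
  assume "\<not> ?thesis"
  then have "s + 1 - card Lset \<le> card M" by simp
  then obtain M0 where M0: "M0 \<subseteq> M" "card M0 = s + 1 - card Lset" by (rule obtain_subset_with_card_n)
  have "matching M0" using M0(1) assms(2) unfolding matching_def by blast
  moreover have "\<Union>M0 \<inter> Lset = {}" using M0(1) assms(3) by blast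
  moreover have "card Lset + card M0 \<le> s + 1" using M0(2) card_L[OF assms(1)] by simp
  ultimately obtain M' where "matching M'" "card M' = card Lset + card M0"
    using greedy[OF assms(1) subset_refl] by blast
  then have "card M' = s + 1" using M0(2) card_L[OF assms(1)] by simp
  then show False using matching_le \<open>matching M'\<close> by fastforce
qed

end

locale mx = free +
  fixes MH :: "nat set set"
  assumes MHm: "matching MH" and MHL: "\<Union>MH \<inter> Lset = {}"
  and MHmax: "\<And>M. matching M \<Longrightarrow> \<Union>M \<inter> Lset = {} \<Longrightarrow> card M \<le> card MH"
begin

definition Iset :: "nat set" where
  "Iset = {0..<n} - Lset - \<Union>MH"

definition heavy :: "nat \<Rightarrow> bool" where
  "heavy x \<longleftrightarrow> 2 \<le> card (nb x \<inter> Iset)"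

lemma MH_E: "e \<in> MH \<Longrightarrow> e \<in> E" using MHm unfolding matching_def by auto

lemma MH_disj: "e \<in> MH \<Longrightarrow> e' \<in> MH \<Longrightarrow> e \<noteq> e' \<Longrightarrow> e \<inter> e' = {}"
  using MHm unfolding matching_def by auto

lemma augment:
  assumes R: "R \<subseteq> MH" and AE: "A \<subseteq> E" and Ad: "\<And>a b. a \<in> A \<Longrightarrow> b \<in> A \<Longrightarrow> a \<noteq> b \<Longrightarrow> a \<inter> b = {}"
    and AV: "\<Union>A \<subseteq> \<Union>R \<union> Iset" and fA: "finite A" and c: "card R < card A"
  shows False
proof -
  define M' where "M' = (MH - R) \<union> A"
  have ne: "a \<in> A \<Longrightarrow> a \<noteq> {}" for a using AE E_form by blast
  have dis1: "e \<inter> a = {}" if e: "e \<in> MH - R" and a: "a \<in> A" for e a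
  proof -
    have "e \<inter> \<Union>R = {}" using MH_disj e R by blast
    moreover have "e \<inter> Iset = {}" using e unfolding Iset_def by blast
    ultimately show ?thesis using AV a by blast
  qed
  have "matching M'"
    unfolding matching_def M'_def
  proof (intro conjI ballI impI)
    show "MH - R \<union> A \<subseteq> E" using MHm AE unfolding matching_def by auto
  next
    fix e e' assume e: "e \<in> MH - R \<union> A" and e': "e' \<in> MH - R \<union> A" and ee: "e \<noteq> e'"
    show "e \<inter> e' = {}"
    proof (cases "e \<in> A")
      case True
      show ?thesis
      proof (cases "e' \<in> A")
        case True then show ?thesis using Ad \<open>e \<in> A\<close> ee by blast
      next
        case False then have "e' \<in> MH - R" using e' by blast
        then show ?thesis using dis1 \<open>e \<in> A\<close> by blast
      qed
    next
      case False
      then have eM: "e \<in> MH - R" using e by blast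
      show ?thesis
      proof (cases "e' \<in> A")
        case True then show ?thesis using dis1 eM by blast
      next
        case False then have "e' \<in> MH - R" using e' by blast
        then show ?thesis using MH_disj eM ee by blast
      qed
    qed
  qed
  moreover have "\<Union>M' \<inter> Lset = {}"
  proof -
    have "\<Union>R \<inter> Lset = {}" using MHL R by blast
    moreover have "Iset \<inter> Lset = {}" unfolding Iset_def by blast
    ultimately show ?thesis using MHL AV unfolding M'_def by blast
  qed
  ultimately have le: "card M' \<le> card MH" by (rule MHmax)
  have finMH: "finite MH" by (rule finite_matching[OF MHm])
  have "(MH - R) \<inter> A = {}" using dis1 ne by blast
  then have "card M' = card (MH - R) + card A"
    unfolding M'_def using finMH fA by (simp add: card_Un_disjoint)
  moreover have "card (MH - R) = card MH - card R" using R finMH by (simp add: card_Diff_subset finite_subset)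
  moreover have "card R \<le> card MH" using R finMH by (simp add: card_mono)
  ultimately show False using le c by linarith
qed

lemma I_sub: "Iset \<subseteq> {0..<n}" unfolding Iset_def by blast

lemma I_indep: assumes "x \<in> Iset" "y \<in> Iset" shows "\<not> adj x y"
proof
  assume a: "adj x y"
  show False
  proof (rule augment[of "{}" "{{x,y}}"])
    show "{{x, y}} \<subseteq> E" using a by (simp add: adj_def)
    show "\<Union>{{x, y}} \<subseteq> \<Union>{} \<union> Iset" using assms by simp
  qed auto
qed

lemma MH_pair: "e \<in> MH \<Longrightarrow> \<exists>u v. u \<noteq> v \<and> e = {u,v} \<and> adj u v"
  using MH_E E_form unfolding adj_def by blast

lemma Vs_notI: "x \<in> \<Union>MH \<Longrightarrow> x \<notin> Iset" unfolding Iset_def by blast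

lemma K2: assumes e: "{u,v} \<in> MH" and uv: "u \<noteq> v" and hu: "heavy u" and x': "x' \<in> nb v \<inter> Iset"
  shows False
proof -
  have "card (nb u \<inter> Iset - {x'}) \<ge> 1"
  proof -
    have "finite (nb u \<inter> Iset)" using finite_nb by blast
    then have "card (nb u \<inter> Iset - {x'}) \<ge> card (nb u \<inter> Iset) - 1"
      using diff_card_le_card_Diff[of "{x'}" "nb u \<inter> Iset"] by simp
    then show ?thesis using hu unfolding heavy_def by linarith
  qed
  then have "nb u \<inter> Iset - {x'} \<noteq> {}" by (metis card.empty not_one_le_zero)
  then obtain x where x: "x \<in> nb u \<inter> Iset" "x \<noteq> x'" by blast
  have uI: "u \<notin> Iset" "v \<notin> Iset" using e Vs_notI by blast+
  show False
  proof (rule augment[of "{{u,v}}" "{{u,x},{v,x'}}"])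
    show "{{u, v}} \<subseteq> MH" using e by simp
    show "{{u, x}, {v, x'}} \<subseteq> E" using x x' by (auto simp: in_nb adj_def)
    show "\<Union>{{u, x}, {v, x'}} \<subseteq> \<Union>{{u, v}} \<union> Iset" using x x' by auto
    show "card {{u, v}} < card {{u, x}, {v, x'}}"
    proof -
      have "{u,x} \<noteq> {v,x'}" using uv uI x x' by (auto simp: doubleton_eq_iff)
      then show ?thesis by simp
    qed
  next
    fix a b assume "a \<in> {{u, x}, {v, x'}}" "b \<in> {{u, x}, {v, x'}}" "a \<noteq> b"
    then show "a \<inter> b = {}" using uv uI x x' by auto
  qed simp
qed

end

context mx begin

lemma MH_uniq: "x \<in> e \<Longrightarrow> e \<in> MH \<Longrightarrow> x \<in> e' \<Longrightarrow> e' \<in> MH \<Longrightarrow> e = e'"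
  using MH_disj by blast

lemma heavy_ne: "heavy x \<Longrightarrow> \<exists>y. y \<in> nb x \<inter> Iset"
proof -
  assume "heavy x"
  then have "nb x \<inter> Iset \<noteq> {}" unfolding heavy_def by (metis card.empty not_numeral_le_zero)
  then show ?thesis by blast
qed

lemma K3:
  assumes e1: "{u1,w1} \<in> MH" and e2: "{u2,w2} \<in> MH" and ne: "{u1,w1} \<noteq> {u2,w2}"
    and uw1: "u1 \<noteq> w1" and uw2: "u2 \<noteq> w2" and h1: "heavy u1" and h2: "heavy u2" and a: "adj w1 w2"
  shows False
proof -
  obtain x where x: "x \<in> nb u1 \<inter> Iset" using heavy_ne[OF h1] by blast
  have "card (nb u2 \<inter> Iset - {x}) \<ge> 1"
  proof -
    have "finite (nb u2 \<inter> Iset)" using finite_nb by blast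
    then have "card (nb u2 \<inter> Iset - {x}) \<ge> card (nb u2 \<inter> Iset) - 1"
      using diff_card_le_card_Diff[of "{x}" "nb u2 \<inter> Iset"] by simp
    then show ?thesis using h2 unfolding heavy_def by linarith
  qed
  then have "nb u2 \<inter> Iset - {x} \<noteq> {}" by (metis card.empty not_one_le_zero)
  then obtain y where y: "y \<in> nb u2 \<inter> Iset" "y \<noteq> x" by blast
  have d: "{u1,w1} \<inter> {u2,w2} = {}" using MH_disj[OF e1 e2 ne] .
  have nI: "u1 \<notin> Iset" "w1 \<notin> Iset" "u2 \<notin> Iset" "w2 \<notin> Iset" using e1 e2 Vs_notI by blast+
  have dist: "u1 \<noteq> u2" "u1 \<noteq> w2" "w1 \<noteq> u2" "w1 \<noteq> w2" using d by auto
  have xI: "x \<in> Iset" "y \<in> Iset" using x y by auto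
  show False
  proof (rule augment[of "{{u1,w1},{u2,w2}}" "{{u1,x},{w1,w2},{u2,y}}"])
    show "{{u1, w1}, {u2, w2}} \<subseteq> MH" using e1 e2 by simp
    show "{{u1, x}, {w1, w2}, {u2, y}} \<subseteq> E" using x y a by (auto simp: in_nb adj_def)
    show "\<Union>{{u1, x}, {w1, w2}, {u2, y}} \<subseteq> \<Union>{{u1, w1}, {u2, w2}} \<union> Iset" using xI by auto
    have c2: "card {{u1, w1}, {u2, w2}} = 2" using ne by simp
    have "{u1,x} \<noteq> {w1,w2}" "{u1,x} \<noteq> {u2,y}" "{w1,w2} \<noteq> {u2,y}"
      using dist uw1 uw2 nI xI y(2) by (auto simp: doubleton_eq_iff)
    then have "card {{u1, x}, {w1, w2}, {u2, y}} = 3" by simp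
    then show "card {{u1, w1}, {u2, w2}} < card {{u1, x}, {w1, w2}, {u2, y}}" using c2 by simp
  next
    fix a b assume "a \<in> {{u1, x}, {w1, w2}, {u2, y}}" "b \<in> {{u1, x}, {w1, w2}, {u2, y}}" "a \<noteq> b"
    then show "a \<inter> b = {}" using dist uw1 uw2 nI xI y(2) by auto
  qed simp
qed

definition SH :: "nat set" where "SH = {x\<in>\<Union>MH. heavy x}"
definition TA :: "nat set" where "TA = {w\<in>\<Union>MH. \<exists>u. heavy u \<and> {u,w} \<in> MH}"
definition Bset :: "nat set" where "Bset = \<Union>MH - SH - TA"
definition MA :: "nat set set" where "MA = {e\<in>MH. \<exists>u\<in>e. heavy u}"
definition MB :: "nat set set" where "MB = MH - MA"

lemma edge_ne: "{u,w} \<in> MH \<Longrightarrow> u \<noteq> w"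
  using MH_E adjD(3) unfolding adj_def by blast

lemma SH_TA: "SH \<inter> TA = {}"
proof (rule ccontr)
  assume "SH \<inter> TA \<noteq> {}"
  then obtain w u where w: "heavy w" "heavy u" "{u,w} \<in> MH" unfolding SH_def TA_def by blast
  obtain x' where "x' \<in> nb w \<inter> Iset" using heavy_ne[OF w(1)] by blast
  then show False using K2[OF w(3) edge_ne[OF w(3)] w(2)] by blast
qed

lemma TA_noI: "w \<in> TA \<Longrightarrow> nb w \<inter> Iset = {}"
proof (rule ccontr)
  assume "w \<in> TA" "nb w \<inter> Iset \<noteq> {}"
  then obtain u x' where "heavy u" "{u,w} \<in> MH" "x' \<in> nb w \<inter> Iset" unfolding TA_def by blast
  then show False using K2 edge_ne by blast
qed

lemma TA_indep: assumes "w1 \<in> TA" "w2 \<in> TA" shows "\<not> adj w1 w2"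
proof
  assume a: "adj w1 w2"
  obtain u1 u2 where u: "heavy u1" "{u1,w1} \<in> MH" "heavy u2" "{u2,w2} \<in> MH"
    using assms unfolding TA_def by blast
  show False
  proof (cases "{u1,w1} = {u2,w2}")
    case True
    have "w1 \<noteq> w2" using a adj_irrefl by blast
    then have "w1 = u2" using True by (auto simp: doubleton_eq_iff)
    then have "w1 \<in> SH" using u(3,4) unfolding SH_def by blast
    then show False using SH_TA assms(1) by blast
  next
    case False
    then show False using K3[OF u(2) u(4) False edge_ne[OF u(2)] edge_ne[OF u(4)] u(1) u(3) a] by blast
  qed
qed

lemma B_light: "b \<in> Bset \<Longrightarrow> card (nb b \<inter> Iset) \<le> 1"
  unfolding Bset_def SH_def heavy_def by auto

lemma B_MB: "Bset \<subseteq> \<Union>MB"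
proof
  fix b assume b: "b \<in> Bset"
  then obtain e where e: "e \<in> MH" "b \<in> e" unfolding Bset_def by blast
  have "e \<notin> MA"
  proof
    assume "e \<in> MA"
    then obtain u where u: "u \<in> e" "heavy u" unfolding MA_def by blast
    have "u \<noteq> b" using b u unfolding Bset_def SH_def using e by blast
    then have "e = {u,b}" using edge_eq[OF MH_E[OF e(1)] u(1) e(2)] by simp
    then have "b \<in> TA" using e u unfolding TA_def by blast
    then show False using b unfolding Bset_def by blast
  qed
  then show "b \<in> \<Union>MB" using e unfolding MB_def by blast
qed

definition pick :: "nat \<Rightarrow> nat set" where "pick x = (SOME e. e \<in> MH \<and> x \<in> e)"

lemma pick: "x \<in> \<Union>MH \<Longrightarrow> pick x \<in> MH \<and> x \<in> pick x"
  unfolding pick_def by (rule someI_ex) blast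

lemma card_SH: "card SH \<le> card MA"
proof (rule card_inj_on_le[of pick])
  show "inj_on pick SH"
  proof (rule inj_onI)
    fix x y assume x: "x \<in> SH" and y: "y \<in> SH" and eq: "pick x = pick y"
    show "x = y"
    proof (rule ccontr)
      assume ne: "x \<noteq> y"
      have px: "pick x \<in> MH" "x \<in> pick x" using pick x unfolding SH_def by auto
      have py: "y \<in> pick x" using pick y eq unfolding SH_def by auto
      have e: "pick x = {x,y}" using edge_eq[OF MH_E[OF px(1)] px(2) py ne] .
      have hx: "heavy x" "heavy y" using x y unfolding SH_def by auto
      obtain x' where "x' \<in> nb y \<inter> Iset" using heavy_ne[OF hx(2)] by blast
      then show False using K2[of x y x'] e px(1) ne hx(1) by simp
    qed
  qed
  show "pick ` SH \<subseteq> MA"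
  proof
    fix e assume "e \<in> pick ` SH"
    then obtain x where "x \<in> SH" "e = pick x" by blast
    then show "e \<in> MA" using pick[of x] unfolding SH_def MA_def by blast
  qed
  show "finite MA" using finite_matching[OF MHm] unfolding MA_def by simp
qed

lemma card_TA: "card TA \<le> card MA"
proof (rule card_inj_on_le[of pick])
  show "inj_on pick TA"
  proof (rule inj_onI)
    fix x y assume x: "x \<in> TA" and y: "y \<in> TA" and eq: "pick x = pick y"
    show "x = y"
    proof (rule ccontr)
      assume ne: "x \<noteq> y"
      have px: "pick x \<in> MH" "x \<in> pick x" using pick x unfolding TA_def by auto
      have py: "y \<in> pick x" using pick y eq unfolding TA_def by auto
      have e: "pick x = {x,y}" using edge_eq[OF MH_E[OF px(1)] px(2) py ne] .
      obtain u where u: "heavy u" "{u,x} \<in> MH" using x unfolding TA_def by blast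
      have "{u,x} = {x,y}" using MH_uniq[of x "{u,x}" "pick x"] u(2) px e by simp
      then have "u = y" using ne by (auto simp: doubleton_eq_iff)
      then have "y \<in> SH" using u y unfolding SH_def TA_def by blast
      then show False using SH_TA y by blast
    qed
  qed
  show "pick ` TA \<subseteq> MA"
  proof
    fix e assume "e \<in> pick ` TA"
    then obtain x where x: "x \<in> TA" "e = pick x" by blast
    obtain u where u: "heavy u" "{u,x} \<in> MH" using x unfolding TA_def by blast
    have "pick x = {u,x}" using MH_uniq[of x "pick x" "{u,x}"] pick[of x] u(2) x(1) unfolding TA_def by blast
    then show "e \<in> MA" using u x unfolding MA_def by auto
  qed
  show "finite MA" using finite_matching[OF MHm] unfolding MA_def by simp
qed

lemma card_B: "card Bset \<le> 2 * card MB"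
proof -
  have "matching MB" using MHm unfolding MB_def matching_def by blast
  then have "card (\<Union>MB) \<le> 2 * card MB" by (rule card_Vs)
  moreover have "finite (\<Union>MB)" using finite_subset[OF Vs_sub[OF \<open>matching MB\<close>]] by simp
  ultimately show ?thesis using B_MB card_mono by (meson le_trans)
qed

lemma card_MAB: "card MA + card MB = card MH"
proof -
  have "finite MH" by (rule finite_matching[OF MHm])
  moreover have "MA \<subseteq> MH" unfolding MA_def by blast
  ultimately show ?thesis unfolding MB_def by (metis card_Diff_subset card_mono le_add_diff_inverse finite_subset)
qed

end

lemma choose2: "2 * (x choose 2) = x * (x - 1)"
proof (induction x)
  case 0 then show ?case by simp
next
  case (Suc x)
  have "Suc x choose 2 = x + (x choose 2)" by (simp add: numeral_2_eq_2)
  then show ?case using Suc by (cases x) (auto simp: algebra_simps)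
qed

lemma choose3: "6 * (x choose 3) = x * (x - 1) * (x - 2)"
proof (induction x)
  case 0 then show ?case by simp
next
  case (Suc x)
  have "Suc x choose 3 = (x choose 2) + (x choose 3)"
    by (simp add: numeral_3_eq_3 numeral_2_eq_2)
  then have "6 * (Suc x choose 3) = 3 * (x * (x - 1)) + x * (x - 1) * (x - 2)"
    using Suc choose2[of x] by simp
  also have "\<dots> = Suc x * (Suc x - 1) * (Suc x - 2)"
    by (cases x; cases "x - 1"; simp add: algebra_simps)
  finally show ?case .
qed

lemma choose3_int: "2 \<le> x \<Longrightarrow> 6 * int (x choose 3) = int x * (int x - 1) * (int x - 2)"
proof -
  assume "2 \<le> x"
  have "6 * int (x choose 3) = int (6 * (x choose 3))" by simp
  also have "\<dots> = int (x * (x - 1) * (x - 2))" by (simp only: choose3)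
  also have "\<dots> = int x * (int x - 1) * (int x - 2)" using \<open>2 \<le> x\<close> by (simp add: of_nat_diff)
  finally show ?thesis .
qed

lemma poly_big:
  fixes K m :: int
  assumes "6 \<le> K" "2 \<le> m" "m \<le> K"
  shows "3 * (K - m) * (2 * K - 3) \<le> K * (K - 1) * (K - 2) - m * (m - 1) * (m - 2)"
proof -
  have eq: "K * (K - 1) * (K - 2) - m * (m - 1) * (m - 2) - 3 * (K - m) * (2 * K - 3)
      = (K - m) * ((K - 6) * (K - 1) + 3 + (m - 2) * (K + m - 1))"
    by (simp add: algebra_simps)
  have "0 \<le> (K - 6) * (K - 1)" using assms by simp
  moreover have "0 \<le> (m - 2) * (K + m - 1)" using assms by simp
  ultimately have "0 \<le> (K - m) * ((K - 6) * (K - 1) + 3 + (m - 2) * (K + m - 1))"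
    using assms by simp
  then show ?thesis using eq by linarith
qed

lemma binom_diff_mono:
  assumes "3 \<le> l" "q \<le> k + 1"
  shows "int ((k+3) choose 3) - int ((k+3-q) choose 3) \<le> int ((l+k) choose l) - int ((l+k-q) choose l)"
  using assms(1)
proof (induction l rule: dec_induct)
  case base then show ?case by (simp add: add.commute)
next
  case (step l)
  have a: "Suc l + k = Suc (l + k)" by simp
  have b: "Suc l + k - q = Suc (l + k - q)" using assms(2) step(1) by simp
  have m: "(l + k - q) choose Suc l \<le> (l + k) choose Suc l" by (rule binomial_right_mono) simp
  have e1: "int (Suc l + k choose Suc l) = int (l+k choose l) + int (l+k choose Suc l)"
    by (simp only: a binomial_Suc_Suc of_nat_add)
  have e2: "int (Suc l + k - q choose Suc l) = int (l+k-q choose l) + int (l+k-q choose Suc l)"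
    by (simp only: b binomial_Suc_Suc of_nat_add)
  have m': "int ((l + k - q) choose Suc l) \<le> int ((l + k) choose Suc l)" using m by simp
  show ?case using step.IH m' e1 e2 by linarith
qed

lemma c3vals: "(2::nat) choose 3 = 0" "(3::nat) choose 3 = 1" "(4::nat) choose 3 = 4" "(5::nat) choose 3 = 10"
  using choose3[of 2] choose3[of 3] choose3[of 4] choose3[of 5] by simp_all

lemma c2vals: "(3::nat) choose 2 = 3" "(5::nat) choose 2 = 10"
  using choose2[of 3] choose2[of 5] by simp_all

lemma lin_aux: "3 * (a::int) \<le> 6 * b - 6 * c \<Longrightarrow> 0 \<le> x \<Longrightarrow> a \<le> 2 * (b - c) + x" by presburger

lemma N1:
  fixes X :: int
  assumes l3: "3 \<le> l" and lt: "l \<le> t" and ls: "l + 1 \<le> s" and pl: "l - 1 \<le> p" and pq: "p + q \<le> s"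
    and qh: "q + h + (l - 1) \<le> s" and X0: "0 \<le> X"
    and XN: "2 * (s - l) + 1 < l + t \<Longrightarrow> int ((2 * (s - l) + 1) choose 2) \<le> X"
  shows "int (q * (2 * q + 2 * h + 1)) \<le> int (t - 1) * (int (s choose l) - int (p choose l)) + X"
proof (cases "q = 0")
  case True
  have "p choose l \<le> s choose l" using pq by (intro binomial_right_mono) simp
  then have "0 \<le> int (t - 1) * (int (s choose l) - int (p choose l))" by simp
  then show ?thesis using True X0 by simp
next
  case False
  define k where "k = s - l"
  have sk: "s = l + k" "1 \<le> k" using ls unfolding k_def by auto
  have qk: "q \<le> k + 1" using pq pl sk by linarith
  have F: "int (q * (2 * q + 2 * h + 1)) \<le> int q * (2 * int k + 3)"
  proof -
    have "2 * q + 2 * h + 1 \<le> 2 * k + 3" using qh sk by linarith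
    then have "q * (2 * q + 2 * h + 1) \<le> q * (2 * k + 3)" by (rule mult_le_mono2)
    then have "int (q * (2 * q + 2 * h + 1)) \<le> int (q * (2 * k + 3))" by (simp only: of_nat_le_iff)
    also have "\<dots> = int q * (2 * int k + 3)" by simp
    finally show ?thesis .
  qed
  have cp: "p choose l \<le> (s - q) choose l" using pq by (intro binomial_right_mono) simp
  have D3: "int ((k+3) choose 3) - int ((k+3-q) choose 3) \<le> int (s choose l) - int ((s - q) choose l)"
    using binom_diff_mono[OF l3 qk] sk by simp
  have D0: "0 \<le> int ((k+3) choose 3) - int ((k+3-q) choose 3)"
    using binomial_right_mono[of "k+3-q" "k+3" 3] by simp
  have t2: "2 \<le> int (t - 1)" using lt l3 by simp
  have "2 * (int ((k+3) choose 3) - int ((k+3-q) choose 3)) \<le> int (t - 1) * (int (s choose l) - int (p choose l))"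
  proof -
    have "int (s choose l) - int ((s - q) choose l) \<le> int (s choose l) - int (p choose l)" using cp by simp
    with D3 have "int ((k+3) choose 3) - int ((k+3-q) choose 3) \<le> int (s choose l) - int (p choose l)" by linarith
    then show ?thesis using t2 D0 by (meson mult_mono order_trans zero_le_numeral)
  qed
  moreover have "int q * (2 * int k + 3) \<le> 2 * (int ((k+3) choose 3) - int ((k+3-q) choose 3)) + X"
  proof -
    consider "k = 1" | "k = 2" | "3 \<le> k" using sk by linarith
    then show ?thesis
    proof cases
      case 1
      then have "int ((2 * (s - l) + 1) choose 2) \<le> X" using XN sk lt l3 by simp
      then have X3: "3 \<le> X" using 1 sk c2vals by simp
      have "q = 1 \<or> q = 2" using qk 1 False by linarith
      then show ?thesis using 1 X3 c3vals by (auto simp: binomial_eq_0)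
    next
      case 2
      then have "int ((2 * (s - l) + 1) choose 2) \<le> X" using XN sk lt l3 by simp
      then have X3: "10 \<le> X" using 2 sk c2vals by simp
      have "q = 1 \<or> q = 2 \<or> q = 3" using qk 2 False by linarith
      then show ?thesis using 2 X3 c3vals by (auto simp: binomial_eq_0)
    next
      case 3
      define K where "K = int k + 3"
      define m where "m = int (k + 3 - q)"
      have m2: "2 \<le> k + 3 - q" using qk by linarith
      have e1: "6 * int ((k+3) choose 3) = K * (K - 1) * (K - 2)" unfolding K_def
        using choose3_int[of "k+3"] by simp
      have e2: "6 * int ((k+3-q) choose 3) = m * (m - 1) * (m - 2)" unfolding m_def
        using choose3_int[OF m2] by simp
      have mq: "m = K - int q" unfolding m_def K_def using qk by (simp add: of_nat_diff)
      have "3 * (K - m) * (2 * K - 3) \<le> K * (K - 1) * (K - 2) - m * (m - 1) * (m - 2)"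
        by (rule poly_big) (use 3 m2 mq in \<open>auto simp: K_def m_def\<close>)
      moreover have "3 * (K - m) * (2 * K - 3) = 3 * (int q * (2 * int k + 3))"
      proof -
        have "K - m = int q" using mq by simp
        moreover have "2 * K - 3 = 2 * int k + 3" unfolding K_def by simp
        ultimately show ?thesis by simp
      qed
      ultimately have "3 * (int q * (2 * int k + 3)) \<le> 6 * int ((k+3) choose 3) - 6 * int ((k+3-q) choose 3)"
        using e1 e2 by linarith
      from lin_aux[OF this X0] show ?thesis .
    qed
  qed
  ultimately show ?thesis using F by linarith
qed


context mx begin

definition Sset :: "nat set" where "Sset = Lset \<union> SH"
definition Wset :: "nat set" where "Wset = {0..<n} - Sset"
definition Rset :: "nat set" where "Rset = TA \<union> Iset"

lemma L_sub: "Lset \<subseteq> {0..<n}" unfolding Lset_def by blast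
lemma VMH_sub: "\<Union>MH \<subseteq> {0..<n}" by (rule Vs_sub[OF MHm])
lemma SH_sub: "SH \<subseteq> \<Union>MH" unfolding SH_def by blast
lemma TA_sub: "TA \<subseteq> \<Union>MH" unfolding TA_def by blast
lemma B_sub: "Bset \<subseteq> \<Union>MH" unfolding Bset_def by blast
lemma S_sub: "Sset \<subseteq> {0..<n}" unfolding Sset_def using L_sub SH_sub VMH_sub by blast
lemma W_sub: "Wset \<subseteq> {0..<n}" unfolding Wset_def by blast
lemma R_sub: "Rset \<subseteq> {0..<n}" unfolding Rset_def using TA_sub VMH_sub I_sub by blast

lemma fin_sub: "A \<subseteq> {0..<n} \<Longrightarrow> finite A" using finite_subset by blast

lemma card_S: "card Sset = card Lset + card SH"
proof -
  have "Lset \<inter> SH = {}" using MHL SH_sub by blast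
  then show ?thesis unfolding Sset_def
    using fin_sub[OF L_sub] fin_sub[OF subset_trans[OF SH_sub VMH_sub]] by (simp add: card_Un_disjoint)
qed

lemma card_W: "card Wset = n - card Sset"
  unfolding Wset_def using S_sub by (simp add: card_Diff_subset fin_sub)

lemma W_eq: "Wset = Bset \<union> Rset"
  unfolding Wset_def Sset_def Rset_def Bset_def Iset_def using SH_TA MHL TA_sub SH_sub VMH_sub L_sub by blast

lemma B_R: "Bset \<inter> Rset = {}"
  unfolding Rset_def Bset_def Iset_def using TA_sub by blast

lemma R_indep: "u \<in> Rset \<Longrightarrow> nb u \<inter> Rset = {}"
proof -
  assume u: "u \<in> Rset"
  show "nb u \<inter> Rset = {}"
  proof (rule ccontr)
    assume "nb u \<inter> Rset \<noteq> {}"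
    then obtain v where v: "adj u v" "v \<in> Rset" by (auto simp: in_nb)
    show False
    proof (cases "u \<in> TA")
      case True
      show False
      proof (cases "v \<in> TA")
        case True then show False using TA_indep \<open>u \<in> TA\<close> v(1) by blast
      next
        case False then have "v \<in> Iset" using v(2) unfolding Rset_def by blast
        then show False using TA_noI[OF \<open>u \<in> TA\<close>] v(1) by (auto simp: in_nb)
      qed
    next
      case False
      then have uI: "u \<in> Iset" using u unfolding Rset_def by blast
      show False
      proof (cases "v \<in> TA")
        case True
        have "adj v u" using v(1) by (simp add: adj_sym)
        then show False using TA_noI[OF True] uI by (auto simp: in_nb)
      next
        case False then have "v \<in> Iset" using v(2) unfolding Rset_def by blast
        then show False using I_indep uI v(1) by blast
      qed
    qed
  qed
qed

lemma PP_RR: "PP Rset Rset = 0"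
  unfolding PP_def using R_indep by simp

lemma PP_WW: "PP Wset Wset \<le> card Bset * (card Bset - 1) + 2 * (card Bset * (card TA + 1))"
proof -
  have fB: "finite Bset" using fin_sub B_sub VMH_sub by blast
  have fR: "finite Rset" using fin_sub[OF R_sub] .
  have "PP Wset Wset = PP Bset Wset + PP Rset Wset"
    unfolding W_eq using PP_Un1[OF B_R fB fR] by simp
  also have "PP Bset Wset = PP Bset Bset + PP Bset Rset"
    unfolding W_eq using PP_Un2[OF B_R fB fR] by simp
  also have "PP Rset Wset = PP Rset Bset + PP Rset Rset"
    unfolding W_eq using PP_Un2[OF B_R fB fR] by (simp add: add.commute)
  also have "PP Rset Bset = PP Bset Rset" using PP_sym[OF fR fB] .
  finally have eq: "PP Wset Wset = PP Bset Bset + 2 * PP Bset Rset" using PP_RR by simp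
  have "PP Bset Bset \<le> card Bset * (card Bset - 1)"
  proof (rule PP_le_card[OF _ fB])
    fix u assume "u \<in> Bset"
    have "nb u \<inter> Bset \<subseteq> Bset - {u}" using adj_irrefl by (auto simp: in_nb)
    then have "card (nb u \<inter> Bset) \<le> card (Bset - {u})" using fB by (simp add: card_mono)
    then show "card (nb u \<inter> Bset) \<le> card Bset - 1" using \<open>u \<in> Bset\<close> fB by simp
  qed
  moreover have "PP Bset Rset \<le> card Bset * (card TA + 1)"
  proof (rule PP_le_card[OF _ fB])
    fix u assume u: "u \<in> Bset"
    have fT: "finite TA" using fin_sub TA_sub VMH_sub by blast
    have "nb u \<inter> Rset \<subseteq> TA \<union> (nb u \<inter> Iset)" unfolding Rset_def by blast
    then have "card (nb u \<inter> Rset) \<le> card (TA \<union> (nb u \<inter> Iset))"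
      using fT finite_nb by (simp add: card_mono)
    also have "\<dots> \<le> card TA + card (nb u \<inter> Iset)" by (rule card_Un_le)
    also have "\<dots> \<le> card TA + 1" using B_light[OF u] by simp
    finally show "card (nb u \<inter> Rset) \<le> card TA + 1" .
  qed
  ultimately show ?thesis using eq by linarith
qed

lemma handshake_split: "2 * card E = PP Sset Sset + 2 * PP Wset Sset + PP Wset Wset"
  "PP {0..<n} Sset = PP Sset Sset + PP Wset Sset"
proof -
  have V: "{0..<n} = Sset \<union> Wset" unfolding Wset_def using S_sub by blast
  have d: "Sset \<inter> Wset = {}" unfolding Wset_def by blast
  have fS: "finite Sset" using fin_sub[OF S_sub] .
  have fW: "finite Wset" using fin_sub[OF W_sub] .
  have "PP {0..<n} {0..<n} = PP Sset (Sset \<union> Wset) + PP Wset (Sset \<union> Wset)"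
    unfolding V[symmetric] using PP_Un1[OF d fS fW] V by simp
  also have "\<dots> = PP Sset Sset + PP Sset Wset + (PP Wset Sset + PP Wset Wset)"
    using PP_Un2[OF d fS fW] by simp
  also have "PP Sset Wset = PP Wset Sset" using PP_sym[OF fS fW] .
  finally show "2 * card E = PP Sset Sset + 2 * PP Wset Sset + PP Wset Wset" using handshake by simp
  show "PP {0..<n} Sset = PP Sset Sset + PP Wset Sset"
    using V PP_Un1[OF d fS fW] by simp
qed

lemma PP_SS: "PP Sset Sset \<le> card Sset * (card Sset - 1)"
proof (rule PP_le_card[OF _ fin_sub[OF S_sub]])
  fix u assume "u \<in> Sset"
  have "nb u \<inter> Sset \<subseteq> Sset - {u}" using adj_irrefl by (auto simp: in_nb)
  then have "card (nb u \<inter> Sset) \<le> card (Sset - {u})" using fin_sub[OF S_sub] by (simp add: card_mono)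
  then show "card (nb u \<inter> Sset) \<le> card Sset - 1" using \<open>u \<in> Sset\<close> fin_sub[OF S_sub] by simp
qed

lemma PP_WS1: "PP Wset Sset \<le> card Wset * card Sset"
proof (rule PP_le_card[OF _ fin_sub[OF W_sub]])
  fix u show "card (nb u \<inter> Sset) \<le> card Sset" using fin_sub[OF S_sub] by (simp add: card_mono)
qed

lemma PP_WS2: "PP Wset Sset \<le> card Wset * card Lset + card SH * (3 * s - 1)"
proof -
  have fL: "finite Lset" using fin_sub[OF L_sub] .
  have fSH: "finite SH" using fin_sub SH_sub VMH_sub by blast
  have fW: "finite Wset" using fin_sub[OF W_sub] .
  have d: "Lset \<inter> SH = {}" using MHL SH_sub by blast
  have "PP Wset Sset = PP Wset Lset + PP Wset SH" unfolding Sset_def by (rule PP_Un2[OF d fL fSH])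
  moreover have "PP Wset Lset \<le> card Wset * card Lset"
    by (rule PP_le_card[OF _ fW]) (simp add: card_mono fL)
  moreover have "PP Wset SH \<le> card SH * (3 * s - 1)"
  proof -
    have "PP Wset SH = PP SH Wset" by (rule PP_sym[OF fW fSH])
    also have "\<dots> \<le> card SH * (3 * s - 1)"
    proof (rule PP_le_card[OF _ fSH])
      fix u assume u: "u \<in> SH"
      have "u \<notin> Lset" "u \<in> {0..<n}" using u SH_sub MHL VMH_sub by blast+
      then have "card (nb u) < 3 * s" unfolding Lset_def by auto
      moreover have "card (nb u \<inter> Wset) \<le> card (nb u)" using finite_nb by (simp add: card_mono)
      ultimately show "card (nb u \<inter> Wset) \<le> 3 * s - 1" by linarith
    qed
    finally show ?thesis .
  qed
  ultimately show ?thesis by linarith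
qed

end

context mx begin

lemma PWW_F: "PP Wset Wset \<le> 2 * (card MB * (2 * card MB + 2 * card MA + 1))"
proof -
  define b where "b = card Bset"
  define q where "q = card MB"
  define h where "h = card MA"
  have bq: "b \<le> 2 * q" unfolding b_def q_def by (rule card_B)
  have th: "card TA \<le> h" unfolding h_def by (rule card_TA)
  have "b * (b - 1) \<le> (2 * q) * (2 * q - 1)" using bq by (intro mult_le_mono) auto
  moreover have "b * (card TA + 1) \<le> (2 * q) * (h + 1)" using bq th by (intro mult_le_mono) auto
  moreover have "(2 * q) * (2 * q - 1) + 2 * ((2 * q) * (h + 1)) = 2 * (q * (2 * q + 2 * h + 1))"
    by (cases q) (simp_all add: algebra_simps)
  ultimately show ?thesis using PP_WW unfolding b_def[symmetric] q_def[symmetric] h_def[symmetric] by linarith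
qed

lemma main_mx:
  fixes X :: int
  assumes l3: "3 \<le> l" and lt: "l \<le> t" and ls: "l + 1 \<le> s" and nbig: "2 * ((3 * s) choose 2) \<le> n"
    and X0: "0 \<le> X" and XN: "2 * (s - l) + 1 < l + t \<Longrightarrow> int ((2 * (s - l) + 1) choose 2) \<le> X"
  shows "2 * int (card E) + int (l * (l - 1)) \<le> 2 * int ((l - 1) * n) + 2 * int ((t - 1) * (s choose l)) + 2 * X"
proof -
  define a where "a = card Lset"
  define h1 where "h1 = card SH"
  define h where "h = card MA"
  define q where "q = card MB"
  define p where "p = card Sset"
  define w where "w = card Wset"
  define F where "F = q * (2 * q + 2 * h + 1)"
  define PSS where "PSS = PP Sset Sset"
  define PWS where "PWS = PP Wset Sset"
  define PWW where "PWW = PP Wset Wset"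
  have s2: "2 \<le> s" using ls l3 by simp
  have pa: "p = a + h1" unfolding p_def a_def h1_def by (rule card_S)
  have h1h: "h1 \<le> h" unfolding h1_def h_def by (rule card_SH)
  have ahq: "a + h + q \<le> s" using H_match[OF s2 MHm MHL] card_MAB unfolding a_def h_def q_def by simp
  have pn: "p \<le> n" unfolding p_def using card_mono[OF _ S_sub] by simp
  have wn: "w = n - p" unfolding w_def p_def by (rule card_W)
  have E2: "2 * card E = PSS + 2 * PWS + PWW" unfolding PSS_def PWS_def PWW_def by (rule handshake_split(1))
  have PWWb: "PWW \<le> 2 * F" unfolding PWW_def F_def q_def h_def by (rule PWW_F)
  have Cs0: "0 \<le> int ((t - 1) * (s choose l))" by simp
  show ?thesis
  proof (cases "a + 2 \<le> l")
    case True
    have PSSb: "PSS \<le> p * (p - 1)" unfolding PSS_def p_def by (rule PP_SS)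
    have PWSb: "PWS \<le> w * a + h1 * (3 * s - 1)" unfolding PWS_def w_def a_def h1_def by (rule PP_WS2)
    have ps: "p \<le> s" using pa h1h ahq by linarith
    have f1: "p * (p - 1) \<le> s * s" using ps by (intro mult_le_mono) auto
    have f2: "w * a \<le> n * (l - 2)" using wn True by (intro mult_le_mono) auto
    have f3: "h1 * (3 * s - 1) \<le> s * (3 * s)" using h1h ahq by (intro mult_le_mono) auto
    have f4: "F \<le> s * (2 * s + 1)" unfolding F_def using ahq by (intro mult_le_mono) auto
    have f5: "l * (l - 1) \<le> s * s" using ls by (intro mult_le_mono) auto
    have f6: "2 * ((3 * s) choose 2) = (3 * s) * (3 * s - 1)" by (rule choose2)
    have f7: "(3 * s) * (3 * s - 1) + 3 * s = 9 * (s * s)"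
      using s2 by (cases s) (simp_all add: algebra_simps)
    have f8: "4 * s \<le> s * s" using ls l3 by (intro mult_le_mono) auto
    have f9: "n * (l - 2) + n = (l - 1) * n" using l3 by (cases l) (simp_all add: algebra_simps)
    have f10: "s * (3 * s) = 3 * (s * s)" by simp
    have f11: "s * (2 * s + 1) = 2 * (s * s) + s" by (simp add: algebra_simps)
    have "2 * card E + l * (l - 1) \<le> 2 * ((l - 1) * n)"
      using E2 PSSb PWSb PWWb f1 f2 f3 f4 f5 f6 f7 f8 f9 f10 f11 nbig by linarith
    then have "2 * int (card E) + int (l * (l - 1)) \<le> 2 * int ((l - 1) * n)" by linarith
    then show ?thesis using Cs0 X0 by linarith
  next
    case False
    then have al: "l - 1 \<le> a" by linarith
    have N: "int F \<le> int (t - 1) * (int (s choose l) - int (p choose l)) + X"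
      unfolding F_def
    proof (rule N1[OF l3 lt ls _ _ _ X0 XN])
      show "l - 1 \<le> p" using pa al by linarith
      show "p + q \<le> s" using pa h1h ahq by linarith
      show "q + h + (l - 1) \<le> s" using al ahq by linarith
    qed
    have Nr: "int (t - 1) * (int (s choose l) - int (p choose l))
        = int ((t - 1) * (s choose l)) - int ((t - 1) * (p choose l))" by (simp only: of_nat_mult right_diff_distrib)
    show ?thesis
    proof (cases "l \<le> p")
      case True
      have PVS: "PSS + PWS \<le> (l - 1) * n + (t - 1) * (p choose l)"
        using PP_S_bound[OF S_sub subset_refl] l3 handshake_split(2) unfolding PSS_def PWS_def p_def by simp
      have PWS2: "PWS \<le> (l - 1) * w + (t - 1) * (p choose l)"
        using PP_S_bound[OF S_sub W_sub] l3 unfolding PWS_def p_def w_def by simp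
      have g1: "(l - 1) * w + (l - 1) * p = (l - 1) * n" using wn pn by (simp add: diff_mult_distrib2)
      have g2: "l * (l - 1) \<le> (l - 1) * p" using True by (simp add: mult.commute)
      have "int (2 * card E) \<le> int ((l - 1) * n + (t - 1) * (p choose l)) + int ((l - 1) * w + (t - 1) * (p choose l)) + int (2 * F)"
        using E2 PVS PWS2 PWWb by linarith
      then show ?thesis using N Nr g1 g2 by linarith
    next
      case False
      then have pl: "p = l - 1" using pa al by linarith
      have PSSb: "PSS \<le> p * (p - 1)" unfolding PSS_def p_def by (rule PP_SS)
      have PWSb: "PWS \<le> w * p" unfolding PWS_def w_def p_def by (rule PP_WS1)
      have cp: "p choose l = 0" using pl l3 by simp
      have id: "int (p * (p - 1)) + 2 * int (w * p) + int (l * (l - 1)) = 2 * int ((l - 1) * n)"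
      proof -
        have ln: "l - 1 \<le> n" using pn pl by simp
        define L where "L = int l"
        define N where "N = int n"
        have e1: "int (p * (p - 1)) = (L - 1) * (L - 2)" unfolding pl L_def using l3 by (simp add: of_nat_diff)
        have e2: "int (w * p) = (N - L + 1) * (L - 1)" unfolding wn pl L_def N_def using l3 ln by (simp add: of_nat_diff)
        have e3: "int (l * (l - 1)) = L * (L - 1)" unfolding L_def using l3 by (simp add: of_nat_diff)
        have e4: "int ((l - 1) * n) = (L - 1) * N" unfolding L_def N_def using l3 by (simp add: of_nat_diff)
        show ?thesis unfolding e1 e2 e3 e4 by (simp add: algebra_simps)
      qed
      have "int (2 * card E) \<le> int (p * (p - 1)) + 2 * int (w * p) + int (2 * F)"
        using E2 PSSb PWSb PWWb by linarith
      then show ?thesis using N Nr id cp by linarith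
    qed
  qed
qed

end

context free begin

lemma main_free:
  fixes X :: int
  assumes l3: "3 \<le> l" and lt: "l \<le> t" and ls: "l + 1 \<le> s" and nbig: "2 * ((3 * s) choose 2) \<le> n"
    and X0: "0 \<le> X" and XN: "2 * (s - l) + 1 < l + t \<Longrightarrow> int ((2 * (s - l) + 1) choose 2) \<le> X"
  shows "2 * int (card E) + int (l * (l - 1)) \<le> 2 * int ((l - 1) * n) + 2 * int ((t - 1) * (s choose l)) + 2 * X"
proof -
  let ?P = "\<lambda>M. matching M \<and> \<Union>M \<inter> Lset = {}"
  have P0: "?P {}" unfolding matching_def by simp
  have bnd: "\<forall>M. ?P M \<longrightarrow> card M < s + 1" using matching_le by (simp add: less_Suc_eq_le)
  obtain MH where MH: "?P MH" "\<forall>M. ?P M \<longrightarrow> card M \<le> card MH"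
    using ex_has_greatest_nat[of ?P "{}" card "s + 1", OF P0 bnd] by blast
  interpret m: mx n E l t s MH
  proof unfold_locales
    show "matching MH" using MH(1) by simp
    show "\<Union>MH \<inter> Lset = {}" using MH(1) by simp
    show "\<And>M. matching M \<Longrightarrow> \<Union>M \<inter> Lset = {} \<Longrightarrow> card M \<le> card MH" using MH(2) by blast
  qed
  show ?thesis by (rule m.main_mx[OF assms])
qed

end

lemma ex_finite: fixes m :: nat shows "finite {card E | E. simple_graph ({0..<m}, E) \<and> (\<forall>H\<in>F. \<not> subgraph_of H ({0..<m}, E))}"
proof -
  have "{card E | E. simple_graph ({0..<m}, E) \<and> (\<forall>H\<in>F. \<not> subgraph_of H ({0..<m}, E))}
      \<subseteq> card ` Pow (Pow {0..<m})"
  proof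
    fix x assume "x \<in> {card E | E. simple_graph ({0..<m}, E) \<and> (\<forall>H\<in>F. \<not> subgraph_of H ({0..<m}, E))}"
    then obtain E where E: "x = card E" "simple_graph ({0..<m}, E)" by blast
    then have "E \<subseteq> Pow {0..<m}" unfolding simple_graph_def by auto
    then show "x \<in> card ` Pow (Pow {0..<m})" using E(1) by blast
  qed
  moreover have "finite (card ` Pow (Pow {0..<m}))" by (intro finite_imageI) (simp add: finite_Pow_iff)
  ultimately show ?thesis by (rule finite_subset)
qed

lemma ex_ge:
  fixes m :: nat
  assumes "simple_graph ({0..<m}, E)" "\<forall>H\<in>F. \<not> subgraph_of H ({0..<m}, E)"
  shows "card E \<le> ex m F"
  unfolding ex_def by (rule Max_ge[OF ex_finite]) (use assms in blast)

lemma ex_attained: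
  fixes m :: nat
  assumes "simple_graph ({0..<m}, {})" "\<forall>H\<in>F. \<not> subgraph_of H ({0..<m}, {})"
  shows "\<exists>E. simple_graph ({0..<m}, E) \<and> (\<forall>H\<in>F. \<not> subgraph_of H ({0..<m}, E)) \<and> ex m F = card E"
proof -
  let ?S = "{card E | E. simple_graph ({0..<m}, E) \<and> (\<forall>H\<in>F. \<not> subgraph_of H ({0..<m}, E))}"
  have "?S \<noteq> {}" using assms by blast
  then have "Max ?S \<in> ?S" using ex_finite by (intro Max_in) auto
  then show ?thesis unfolding ex_def by blast
qed

lemma ex_complete:
  assumes "N < l + t"
  shows "N choose 2 \<le> ex N {K_bip l t}"
proof -
  define EN where "EN = {A. A \<subseteq> {0..<N} \<and> card A = 2}"
  have sg: "simple_graph ({0..<N}, EN)"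
    unfolding simple_graph_def EN_def by (auto simp: card_2_iff) blast
  have nK: "\<not> subgraph_of (K_bip l t) ({0..<N}, EN)"
  proof
    assume "subgraph_of (K_bip l t) ({0..<N}, EN)"
    then obtain f where f: "inj_on f {0..<l+t}" "f ` {0..<l+t} \<subseteq> {0..<N}"
      unfolding subgraph_of_def K_bip_def by auto
    have "card {0..<l+t} \<le> card {0..<N}" by (rule card_inj_on_le[OF f]) simp
    then show False using assms by simp
  qed
  have "card EN = N choose 2" unfolding EN_def using n_subsets[of "{0..<N}" 2] by simp
  moreover have "card EN \<le> ex N {K_bip l t}" by (rule ex_ge[OF sg]) (use nK in simp)
  ultimately show ?thesis by simp
qed


theorem corollary3p6:
  fixes l t s n :: nat
  assumes "3 \<le> l" and "l \<le> t" and "s \<ge> l + 1" and "n \<ge> 2 * ((3 * s) choose 2)"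
  shows "real (ex n {K_bip l t, matching_graph (s + 1)})
           \<le> real (t - 1) * real (s choose l) + real (l - 1) * real n
              - real l * (real l - 1) / 2 + real (ex (2 * (s - l) + 1) {K_bip l t})"
proof -
  let ?F = "{K_bip l t, matching_graph (s + 1)}"
  have sg0: "simple_graph ({0..<n}, {})" by (simp add: simple_graph_def)
  have e1: "{0, l} \<in> snd (K_bip l t)"
  proof -
    have "0 < l" "l \<le> l" "l < l + t" using assms(1,2) by auto
    then show ?thesis unfolding K_bip_def snd_conv mem_Collect_eq by (intro exI[of _ "0::nat"] exI[of _ l] conjI refl)
  qed
  have e2: "{2 * 0, 2 * 0 + 1} \<in> snd (matching_graph (s + 1))"
  proof -
    have "(0::nat) < s + 1" by simp
    then show ?thesis unfolding matching_graph_def snd_conv mem_Collect_eq by (intro exI[of _ "0::nat"] conjI refl)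
  qed
  have nH0: "\<forall>H\<in>?F. \<not> subgraph_of H ({0..<n}, {})"
    unfolding subgraph_of_def using e1 e2 by auto
  obtain E where E: "simple_graph ({0..<n}, E)" "\<forall>H\<in>?F. \<not> subgraph_of H ({0..<n}, E)" "ex n ?F = card E"
    using ex_attained[OF sg0 nH0] by blast
  interpret fr: free n E l t s
  proof unfold_locales
    show "simple_graph ({0..<n}, E)" by (rule E(1))
    show "\<not> subgraph_of (K_bip l t) ({0..<n}, E)" using E(2) by simp
    show "\<not> subgraph_of (matching_graph (s + 1)) ({0..<n}, E)" using E(2) by simp
  qed
  define Xn where "Xn = ex (2 * (s - l) + 1) {K_bip l t}"
  have XN: "2 * (s - l) + 1 < l + t \<Longrightarrow> int ((2 * (s - l) + 1) choose 2) \<le> int Xn"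
    unfolding Xn_def using ex_complete by simp
  have X0: "0 \<le> int Xn" by simp
  have I: "2 * int (card E) + int (l * (l - 1)) \<le> 2 * int ((l - 1) * n) + 2 * int ((t - 1) * (s choose l)) + 2 * int Xn"
    using fr.main_free[OF assms(1,2) _ assms(4) X0 XN] assms(3) by simp
  then have Nt: "2 * card E + l * (l - 1) \<le> 2 * ((l - 1) * n) + 2 * ((t - 1) * (s choose l)) + 2 * Xn"
    by linarith
  then have R: "real (2 * card E + l * (l - 1)) \<le> real (2 * ((l - 1) * n) + 2 * ((t - 1) * (s choose l)) + 2 * Xn)"
    by (simp only: of_nat_le_iff)
  have r1: "real (l * (l - 1)) = real l * (real l - 1)" using assms(1) by (simp add: of_nat_diff)
  have r2: "real ((l - 1) * n) = real (l - 1) * real n" by (simp only: of_nat_mult)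
  have r3: "real ((t - 1) * (s choose l)) = real (t - 1) * real (s choose l)" by (simp only: of_nat_mult)
  have "2 * real (card E) + real l * (real l - 1) \<le> 2 * (real (l - 1) * real n) + 2 * (real (t - 1) * real (s choose l)) + 2 * real Xn"
    using R unfolding of_nat_add of_nat_mult[of 2] r1 r2 r3 by simp
  then show ?thesis unfolding E(3) Xn_def[symmetric] by (simp add: field_simps)
qed


end
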